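(* Let $n\ge 1$, $b\in\mathbb{R}^n$, and let $A\in\mathbb{R}^{n\times n}$ be symmetric with all eigenvalues $\lambda_i$ satisfying $0<\lambda_i<2$, $i=1,\dots,n$. Define $g(x)=x-(Ax-b)$ and $f(x)=g(x)-x=-(Ax-b)$. Let $\bar x_k,\bar y_k\in\mathbb{R}^n$ be arbitrary vectors with $\bar y_k\neq\bar x_k$ (so that $f(\bar y_k)-f(\bar x_k)\neq 0$), and define $$\beta_k^\ast=-\frac{\langle f(\bar y_k)-f(\bar x_k),\,f(\bar x_k)\rangle}{\|f(\bar y_k)-f(\bar x_k)\|^2},$$ $$x^0_{k+1}=\bar x_k+\beta_k^\ast(\bar y_k-\bar x_k),\qquad x^1_{k+1}=g(\bar x_k)+\beta_k^\ast\big(g(\bar y_k)-g(\bar x_k)\big).$$ If $f(x^0_{k+1})\neq 0$, then $\|f(x^1_{k+1})\|<\|f(x^0_{k+1})\|$.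
   Context: $\|\cdot\|$ denotes the Euclidean norm on $\mathbb{R}^n$ and $\langle x,y\rangle=x^\intercal y$ the standard inner product. In the paper, $\bar x_k,\bar y_k$ arise as the affine combinations $\sum_i\alpha_i x_{k-m_k+i}$ and $\sum_i\alpha_i g(x_{k-m_k+i})$ (with $\sum_i\alpha_i=1$) computed in an Anderson acceleration step, but the statement holds for arbitrary vectors. *)

theory Defs
  imports "HOL-Analysis.Analysis"
begin

definition real_eigenvalue :: "real^'n^'n \<Rightarrow> real \<Rightarrow> bool" where
  "real_eigenvalue A l \<longleftrightarrow> (\<exists>v. v \<noteq> 0 \<and> A *v v = l *\<^sub>R v)"

end

theory Submission
  imports Defs
begin

lemma sym_inner:
  fixes A :: "real^'n^'n"
  assumes "transpose A = A"
  shows "(A *v x) \<bullet> y = x \<bullet> (A *v y)"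
  by (metis assms dot_lmul_matrix transpose_matrix_vector)

lemma expand_sq:
  fixes u D :: "real^'n"
  shows "(u + t *\<^sub>R D) \<bullet> (u + t *\<^sub>R D) = u \<bullet> u + 2 * t * (u \<bullet> D) + t^2 * (D \<bullet> D)"
  by (simp add: inner_add_left inner_add_right inner_commute[of D u] power2_eq_square mult.assoc distrib_left)

lemma contraction:
  fixes A :: "real^'n^'n" and r :: "real^'n"
  assumes symm: "transpose A = A"
    and eig: "\<And>l. real_eigenvalue A l \<Longrightarrow> 0 < l \<and> l < 2"
    and r: "r \<noteq> 0"
  shows "norm (r - A *v r) < norm r"
proof -
  define B where "B = (\<lambda>x::real^'n. x - A *v x)"
  have Badd: "B (x + y) = B x + B y" for x y
    unfolding B_def matrix_vector_right_distrib by (rule add_diff_add)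
  have Bscale: "B (c *\<^sub>R x) = c *\<^sub>R B x" for c x
    by (simp add: B_def matrix_vector_mult_scaleR scaleR_diff_right)
  have Bsym: "B x \<bullet> y = x \<bullet> B y" for x y
    by (simp add: B_def inner_diff_left inner_diff_right sym_inner[OF symm])
  define h where "h = (\<lambda>x. B x \<bullet> B x)"
  have cont: "continuous_on (sphere 0 1) h"
    unfolding h_def B_def
    by (intro continuous_intros linear_continuous_on matrix_vector_mul_linear)
  obtain i :: 'n where True by simp
  have ne: "sphere (0::real^'n) 1 \<noteq> {}"
  proof -
    have "axis i (1::real) \<in> sphere (0::real^'n) 1" by (simp add: norm_axis_1)
    then show ?thesis by blast
  qed
  obtain u where u: "u \<in> sphere 0 1" and umax: "\<And>x. x \<in> sphere 0 1 \<Longrightarrow> h x \<le> h u"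
    using continuous_attains_sup[OF compact_sphere ne cont] by blast
  define \<mu> where "\<mu> = h u"
  have uu: "u \<bullet> u = 1" using u by (simp add: dot_square_norm)
  have mu0: "\<mu> \<ge> 0" unfolding \<mu>_def h_def by simp
  have bound: "h x \<le> \<mu> * (x \<bullet> x)" for x
  proof (cases "x = 0")
    case True then show ?thesis by (simp add: h_def B_def)
  next
    case False
    define c where "c = 1 / norm x"
    have "c *\<^sub>R x \<in> sphere 0 1" using False by (simp add: c_def)
    then have "h (c *\<^sub>R x) \<le> \<mu>" using umax \<mu>_def by blast
    then have "c^2 * h x \<le> \<mu>" by (simp add: h_def Bscale power2_eq_square)
    then have "c^2 * h x * (norm x)^2 \<le> \<mu> * (norm x)^2"
      by (simp add: mult_right_mono)
    moreover have "c^2 * (norm x)^2 = 1" using False by (simp add: c_def power2_eq_square)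
    ultimately show ?thesis
      by (metis (no_types, lifting) dot_square_norm mult.commute mult.left_commute mult_1)
  qed
  define D where "D = \<mu> *\<^sub>R u - B (B u)"
  define a where "a = D \<bullet> D"
  define c where "c = \<mu> * (D \<bullet> D) - h D"
  have c0: "c \<ge> 0" using bound[of D] by (simp add: c_def)
  have expand: "\<mu> * ((u + t *\<^sub>R D) \<bullet> (u + t *\<^sub>R D)) - h (u + t *\<^sub>R D) = 2 * t * a + t^2 * c" for t
  proof -
    have hB: "h (u + t *\<^sub>R D) = h u + 2 * t * (B u \<bullet> B D) + t^2 * h D"
      unfolding h_def Badd Bscale by (rule expand_sq)
    have "B u \<bullet> B D = D \<bullet> B (B u)" using Bsym[of "B u" D] inner_commute[of D "B (B u)"] by simp
    moreover have "(u + t *\<^sub>R D) \<bullet> (u + t *\<^sub>R D) = u \<bullet> u + 2 * t * (u \<bullet> D) + t^2 * (D \<bullet> D)"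
      by (rule expand_sq)
    moreover have "a = \<mu> * (u \<bullet> D) - D \<bullet> B (B u)"
      by (simp add: a_def D_def inner_diff_left inner_commute)
    moreover have "\<mu> * (1 + 2*t*p + t^2*r) - (\<mu> + 2*t*q + t^2*z) = 2*t*(\<mu>*p - q) + t^2*(\<mu>*r - z)"
      for p q r z :: real by (simp add: algebra_simps)
    ultimately show ?thesis using hB uu unfolding c_def \<mu>_def by simp
  qed
  have ge: "0 \<le> 2 * t * a + t^2 * c" for t
  proof -
    have "h (u + t *\<^sub>R D) \<le> \<mu> * ((u + t *\<^sub>R D) \<bullet> (u + t *\<^sub>R D))" by (rule bound)
    then show ?thesis using expand[of t] by linarith
  qed
  have a0: "a = 0"
  proof -
    define t where "t = - a / (c + 1)"
    have tk: "t * (c + 1) = - a" using c0 by (simp add: t_def)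
    have "0 \<le> 2 * t * a + t^2 * c" by (rule ge)
    then have "0 \<le> (2 * t * a + t^2 * c) * (c+1)^2" using c0 by simp
    also have "\<dots> = 2 * a * (t * (c + 1)) * (c + 1) + (t * (c + 1))^2 * c"
      by (simp add: power2_eq_square algebra_simps)
    also have "\<dots> = - (a^2 * (c + 2))" unfolding tk by (simp add: power2_eq_square algebra_simps)
    finally have "a^2 * (c + 2) \<le> 0" by simp
    moreover have "a^2 * (c + 2) \<ge> 0" using c0 by simp
    ultimately have "a^2 * (c + 2) = 0" by linarith
    then show ?thesis using c0 by simp
  qed
  then have BBu: "B (B u) = \<mu> *\<^sub>R u" by (simp add: a_def D_def)
  define s where "s = sqrt \<mu>"
  have s0: "s \<ge> 0" and ss: "s * s = \<mu>" using mu0 by (auto simp: s_def)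
  have u0: "u \<noteq> 0" using u by auto
  have s1: "s < 1"
  proof (cases "B u + s *\<^sub>R u = 0")
    case True
    then have "B u = - s *\<^sub>R u" by (simp add: eq_neg_iff_add_eq_0)
    have "A *v u = u - B u" by (simp add: B_def)
    also have "\<dots> = (1 + s) *\<^sub>R u" using \<open>B u = - s *\<^sub>R u\<close> by (simp add: scaleR_add_left)
    finally have "A *v u = (1 + s) *\<^sub>R u" .
    then have "real_eigenvalue A (1 + s)" using u0 unfolding real_eigenvalue_def by blast
    then show ?thesis using eig by fastforce
  next
    case False
    define w where "w = B u + s *\<^sub>R u"
    have "B w = B (B u) + s *\<^sub>R B u" by (simp add: w_def Badd Bscale)
    also have "\<dots> = s *\<^sub>R w" by (simp add: BBu ss[symmetric] w_def scaleR_add_right)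
    finally have Bw: "B w = s *\<^sub>R w" .
    have "A *v w = w - B w" by (simp add: B_def)
    also have "\<dots> = (1 - s) *\<^sub>R w" using Bw by (simp add: scaleR_diff_left)
    finally have "A *v w = (1 - s) *\<^sub>R w" .
    then have "real_eigenvalue A (1 - s)" using False unfolding real_eigenvalue_def w_def by blast
    then show ?thesis using eig s0 by fastforce
  qed
  have mu1: "\<mu> < 1" using s0 s1 ss by (metis mult_less_cancel_right1 less_le_trans less_eq_real_def mult_le_one)
  have "(norm (r - A *v r))^2 = h r" by (simp add: h_def B_def dot_square_norm)
  also have "\<dots> \<le> \<mu> * (norm r)^2" using bound[of r] by (simp add: dot_square_norm)
  also have "\<dots> < (norm r)^2" using mu1 r by simp
  finally show ?thesis by (simp add: power2_less_imp_less)
qed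

theorem theorem1:
  fixes A :: "real^'n^'n" and b xb yb :: "real^'n"
    and g f :: "real^'n \<Rightarrow> real^'n" and beta :: real and x0 x1 :: "real^'n"
  assumes symm: "transpose A = A"
    and eig: "\<And>l. real_eigenvalue A l \<Longrightarrow> 0 < l \<and> l < 2"
    and neq: "yb \<noteq> xb"
  defines "g \<equiv> (\<lambda>x. x - (A *v x - b))"
    and "f \<equiv> (\<lambda>x. g x - x)"
    and "beta \<equiv> - (inner (f yb - f xb) (f xb)) / (norm (f yb - f xb))\<^sup>2"
    and "x0 \<equiv> xb + beta *\<^sub>R (yb - xb)"
    and "x1 \<equiv> g xb + beta *\<^sub>R (g yb - g xb)"
  assumes nz: "f x0 \<noteq> 0"
  shows "norm (f x1) < norm (f x0)"
proof -
  have fx: "f x = b - A *v x" for x by (simp add: f_def g_def)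
  have "x1 = x0 + f x0"
    by (simp add: x1_def x0_def fx g_def matrix_vector_right_distrib matrix_vector_mult_scaleR
        matrix_vector_mult_diff_distrib algebra_simps)
  then have "f x1 = f x0 - A *v f x0"
    by (simp add: fx matrix_vector_right_distrib)
  then show ?thesis using contraction[OF symm eig nz] by simp
qed

end
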